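(* Let $(X,T)$ be a topological dynamical system and let $K\subset X$ be a compact set. Then $K$ has bounded topological complexity with respect to $\{d_n\}$ if and only if $K$ is equicontinuous.
   Context: A topological dynamical system (t.d.s.) $(X,T)$ consists of a compact metric space $(X,d)$ and a continuous map $T\colon X\to X$. For $n\in\mathbb{N}$ and $x,y\in X$ let $d_n(x,y)=\max\{d(T^ix,T^iy)\colon 0\le i\le n-1\}$, and $B_{d_n}(x,\varepsilon)=\{y\in X\colon d_n(x,y)<\varepsilon\}$. For $K\subset X$ let $\mathrm{span}_K(n,\varepsilon)=\min\{\#(F)\colon F\subset K,\ K\subset\bigcup_{x\in F}B_{d_n}(x,\varepsilon)\}$. A subset $K$ has bounded topological complexity with respect to $\{d_n\}$ if for every $\varepsilon>0$ there is a positive integer $C$ with $\mathrm{span}_K(n,\varepsilon)\le C$ for all $n\ge1$. A subset $K\subset X$ is equicontinuous if for every $\varepsilon>0$ there is $\delta>0$ such that $d(T^nx,T^ny)<\varepsilon$ for all $n\ge 0$ and all $x,y\in K$ with $d(x,y)<\delta$. *)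

theory Defs
  imports "HOL-Analysis.Analysis"
begin

definition tds :: "'a::metric_space set \<Rightarrow> ('a \<Rightarrow> 'a) \<Rightarrow> bool" where
  "tds X T \<longleftrightarrow> compact X \<and> continuous_on X T \<and> T ` X \<subseteq> X"

text \<open>Bowen metric d_n(x,y) = max over 0 \<le> i \<le> n-1 of d(T^i x, T^i y) (n \<ge> 1).\<close>
definition bowen_dist :: "('a::metric_space \<Rightarrow> 'a) \<Rightarrow> nat \<Rightarrow> 'a \<Rightarrow> 'a \<Rightarrow> real" where
  "bowen_dist T n x y = Max {dist ((T ^^ i) x) ((T ^^ i) y) | i. i < n}"

definition bowen_ball :: "('a::metric_space \<Rightarrow> 'a) \<Rightarrow> nat \<Rightarrow> 'a \<Rightarrow> real \<Rightarrow> 'a set" where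
  "bowen_ball T n x \<epsilon> = {y. bowen_dist T n x y < \<epsilon>}"

definition span_K :: "('a::metric_space \<Rightarrow> 'a) \<Rightarrow> 'a set \<Rightarrow> nat \<Rightarrow> real \<Rightarrow> nat" where
  "span_K T K n \<epsilon> = Inf {card F | F. finite F \<and> F \<subseteq> K \<and> K \<subseteq> (\<Union>x\<in>F. bowen_ball T n x \<epsilon>)}"

definition bounded_top_complexity :: "('a::metric_space \<Rightarrow> 'a) \<Rightarrow> 'a set \<Rightarrow> bool" where
  "bounded_top_complexity T K \<longleftrightarrow>
     (\<forall>\<epsilon>>0. \<exists>C::nat. C > 0 \<and> (\<forall>n\<ge>1. span_K T K n \<epsilon> \<le> C))"

definition equicontinuous_set :: "('a::metric_space \<Rightarrow> 'a) \<Rightarrow> 'a set \<Rightarrow> bool" where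
  "equicontinuous_set T K \<longleftrightarrow>
     (\<forall>\<epsilon>>0. \<exists>\<delta>>0. \<forall>n. \<forall>x\<in>K. \<forall>y\<in>K. dist x y < \<delta> \<longrightarrow> dist ((T ^^ n) x) ((T ^^ n) y) < \<epsilon>)"

end

theory Submission
  imports Defs
begin

lemma sep: fixes S U :: "'a::metric_space set"
  assumes "compact S" "compact U" "S \<inter> U = {}"
  shows "\<exists>d>0. \<forall>x\<in>S. \<forall>y\<in>U. d \<le> dist x y"
proof (cases "S = {} \<or> U = {}")
  case True then show ?thesis by (auto intro: exI[of _ 1])
next
  case False
  have cont: "continuous_on S (\<lambda>x. infdist x U)"
    by (intro continuous_intros)
  obtain x0 where x0: "x0 \<in> S" "\<And>y. y \<in> S \<Longrightarrow> infdist x0 U \<le> infdist y U"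
    using continuous_attains_inf[OF assms(1) _ cont] False by blast
  have "infdist x0 U > 0"
    using x0(1) assms compact_imp_closed in_closed_iff_infdist_zero False
    by (metis disjoint_iff infdist_nonneg order_le_less)
  then show ?thesis
    using x0 infdist_le by (meson order_trans)
qed

lemma finite_pos:
  assumes "finite P"
    and "\<And>p. p \<in> P \<Longrightarrow> \<exists>d>0. Q p (d::real)"
    and "\<And>p d d'. Q p d \<Longrightarrow> 0 < d' \<Longrightarrow> d' \<le> d \<Longrightarrow> Q p d'"
  shows "\<exists>d>0. \<forall>p\<in>P. Q p d"
  using assms
proof (induction P rule: finite_induct)
  case empty then show ?case by (auto intro: exI[of _ 1])
next
  case (insert x F)
  then obtain d where d: "d > 0" "\<forall>p\<in>F. Q p d" by blast
  obtain e where e: "e > 0" "Q x e" using insert by blast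
  show ?case
    apply (rule exI[of _ "min d e"])
    using d e insert.prems(2) by auto
qed

lemma funpow_props:
  assumes "tds X T"
  shows "continuous_on X (T ^^ i) \<and> (T ^^ i) ` X \<subseteq> X"
proof (induction i)
  case 0 then show ?case by (auto intro: continuous_on_id)
next
  case (Suc i)
  have c: "continuous_on X T" "T ` X \<subseteq> X" using assms by (auto simp: tds_def)
  have "continuous_on X (T \<circ> (T ^^ i))"
    using Suc c by (metis continuous_on_compose continuous_on_subset)
  moreover have "(T ^^ Suc i) ` X \<subseteq> X" using Suc c by (auto simp: image_subset_iff)
  ultimately show ?case by simp
qed

lemma bowen_less:
  assumes "n \<ge> 1"
  shows "bowen_dist T n x y < e \<longleftrightarrow> (\<forall>i<n. dist ((T ^^ i) x) ((T ^^ i) y) < e)"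
proof -
  have eq: "{dist ((T ^^ i) x) ((T ^^ i) y) | i. i < n} = (\<lambda>i. dist ((T ^^ i) x) ((T ^^ i) y)) ` {..<n}"
    by auto
  have "0 \<in> {..<n}" using assms by simp
  then have ne: "{..<n} \<noteq> {}" by blast
  show ?thesis unfolding bowen_dist_def eq
    using ne by (subst Max_less_iff) auto
qed

lemma cover_exists:
  assumes "tds X T" "K \<subseteq> X" "compact K" "n \<ge> 1" "e > 0"
  shows "\<exists>F. finite F \<and> F \<subseteq> K \<and> K \<subseteq> (\<Union>x\<in>F. bowen_ball T n x e)"
proof -
  have cX: "compact X" using assms by (simp add: tds_def)
  have "\<exists>d>0. \<forall>i\<in>{..<n}. \<forall>x\<in>X. \<forall>y\<in>X. dist x y < d \<longrightarrow> dist ((T ^^ i) x) ((T ^^ i) y) < e"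
  proof (rule finite_pos)
    fix i assume "i \<in> {..<n}"
    have "uniformly_continuous_on X (T ^^ i)"
      by (rule compact_uniformly_continuous[OF conjunct1[OF funpow_props[OF assms(1)]] cX])
    then have "\<forall>e>0. \<exists>d>0. \<forall>x\<in>X. \<forall>y\<in>X. dist y x < d \<longrightarrow> dist ((T ^^ i) y) ((T ^^ i) x) < e"
      unfolding uniformly_continuous_on_def .
    then show "\<exists>d>0. \<forall>x\<in>X. \<forall>y\<in>X. dist x y < d \<longrightarrow> dist ((T ^^ i) x) ((T ^^ i) y) < e"
      using assms(5) by (simp add: dist_commute)
  next
    fix i d d' assume "\<forall>x\<in>X. \<forall>y\<in>X. dist x y < (d::real) \<longrightarrow> dist ((T ^^ i) x) ((T ^^ i) y) < e" "0 < d'" "d' \<le> d"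
    then show "\<forall>x\<in>X. \<forall>y\<in>X. dist x y < d' \<longrightarrow> dist ((T ^^ i) x) ((T ^^ i) y) < e" by auto
  qed simp
  then obtain d where d: "d > 0" "\<And>i x y. i < n \<Longrightarrow> x \<in> X \<Longrightarrow> y \<in> X \<Longrightarrow> dist x y < d \<Longrightarrow> dist ((T ^^ i) x) ((T ^^ i) y) < e"
    by auto
  obtain k where k: "finite k" "k \<subseteq> K" "K \<subseteq> (\<Union>x\<in>k. ball x d)"
    using seq_compact_imp_totally_bounded[OF compact_imp_seq_compact[OF assms(3)], rule_format, OF d(1)] by (elim exE conjE) blast
  have "K \<subseteq> (\<Union>x\<in>k. bowen_ball T n x e)"
  proof
    fix y assume y: "y \<in> K"
    then obtain x where x: "x \<in> k" "dist x y < d" using k by auto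
    have xK: "x \<in> X" using x k assms(2) by blast
    have yX: "y \<in> X" using y assms(2) by blast
    have "bowen_dist T n x y < e"
      unfolding bowen_less[OF assms(4)] using d(2)[OF _ xK yX x(2)] by blast
    then show "y \<in> (\<Union>x\<in>k. bowen_ball T n x e)" using x by (auto simp: bowen_ball_def)
  qed
  then show ?thesis using k by blast
qed

lemma span_le:
  assumes "finite F" "F \<subseteq> K" "K \<subseteq> (\<Union>x\<in>F. bowen_ball T n x e)"
  shows "span_K T K n e \<le> card F"
  unfolding span_K_def using assms by (intro cInf_lower) auto

lemma span_mem:
  assumes "tds X T" "K \<subseteq> X" "compact K" "n \<ge> 1" "e > 0"
  shows "\<exists>F. finite F \<and> F \<subseteq> K \<and> K \<subseteq> (\<Union>x\<in>F. bowen_ball T n x e) \<and> card F = span_K T K n e"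
proof -
  let ?S = "{card F | F. finite F \<and> F \<subseteq> K \<and> K \<subseteq> (\<Union>x\<in>F. bowen_ball T n x e)}"
  have "?S \<noteq> {}" using cover_exists[OF assms] by blast
  then have "Inf ?S \<in> ?S" by (rule Inf_nat_def1)
  then show ?thesis unfolding span_K_def by auto
qed

lemma dir1:
  fixes X K :: "'a::metric_space set" and T :: "'a \<Rightarrow> 'a"
  assumes "tds X T" and "K \<subseteq> X" and "compact K"
  shows "equicontinuous_set T K \<Longrightarrow> bounded_top_complexity T K"
proof -
  assume eq: "equicontinuous_set T K"
  show "bounded_top_complexity T K"
    unfolding bounded_top_complexity_def
  proof (intro allI impI)
    fix e :: real assume e: "e > 0"
    have "\<exists>d>0. \<forall>n. \<forall>x\<in>K. \<forall>y\<in>K. dist x y < d \<longrightarrow> dist ((T ^^ n) x) ((T ^^ n) y) < e"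
      using eq e unfolding equicontinuous_set_def by simp
    then obtain d where d: "d > 0" "\<And>n x y. x \<in> K \<Longrightarrow> y \<in> K \<Longrightarrow> dist x y < d \<Longrightarrow> dist ((T ^^ n) x) ((T ^^ n) y) < e"
      by blast
    obtain k where k: "finite k" "k \<subseteq> K" "K \<subseteq> (\<Union>x\<in>k. ball x d)"
      using seq_compact_imp_totally_bounded[OF compact_imp_seq_compact[OF assms(3)], rule_format, OF d(1)] by (elim exE conjE) blast
    show "\<exists>C::nat. C > 0 \<and> (\<forall>n\<ge>1. span_K T K n e \<le> C)"
    proof (intro exI[of _ "Suc (card k)"] conjI allI impI)
      fix n :: nat assume n: "n \<ge> 1"
      have "K \<subseteq> (\<Union>x\<in>k. bowen_ball T n x e)"
      proof
        fix y assume y: "y \<in> K"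
        then obtain x where x: "x \<in> k" "dist x y < d" using k by auto
        have xK: "x \<in> K" using x k by blast
        have "bowen_dist T n x y < e"
          unfolding bowen_less[OF n] using d(2)[OF xK y x(2)] by blast
        then show "y \<in> (\<Union>x\<in>k. bowen_ball T n x e)" using x by (auto simp: bowen_ball_def)
      qed
      then have "span_K T K n e \<le> card k" using span_le k by blast
      then show "span_K T K n e \<le> Suc (card k)" by simp
    qed simp
  qed
qed

lemma dir2:
  fixes X K :: "'a::metric_space set" and T :: "'a \<Rightarrow> 'a"
  assumes "tds X T" and "K \<subseteq> X" and "compact K"
  shows "bounded_top_complexity T K \<Longrightarrow> equicontinuous_set T K"
proof -
  assume bc: "bounded_top_complexity T K"
  show "equicontinuous_set T K"
    unfolding equicontinuous_set_def
  proof (intro allI impI)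
    fix e :: real assume e: "e > 0"
    define \<rho> where "\<rho> = e / 5"
    have rho: "\<rho> > 0" using e by (simp add: \<rho>_def)
    obtain C :: nat where C: "\<And>n. n \<ge> 1 \<Longrightarrow> span_K T K n (\<rho>/2) \<le> C"
      using bc rho unfolding bounded_top_complexity_def by (meson half_gt_zero)
    define Sep where "Sep E \<longleftrightarrow> finite E \<and> E \<subseteq> K \<and>
        (\<forall>a\<in>E. \<forall>b\<in>E. a \<noteq> b \<longrightarrow> (\<exists>i. \<rho> \<le> dist ((T ^^ i) a) ((T ^^ i) b)))" for E
    have cardC: "card E \<le> C" if SE: "Sep E" for E
    proof -
      have fE: "finite E" "E \<subseteq> K" using SE by (auto simp: Sep_def)
      obtain w where w: "\<And>a b. a \<in> E \<Longrightarrow> b \<in> E \<Longrightarrow> a \<noteq> b \<Longrightarrow> \<rho> \<le> dist ((T ^^ w a b) a) ((T ^^ w a b) b)"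
        using SE unfolding Sep_def by metis
      define W where "W = (\<lambda>(a,b). w a b) ` (E \<times> E)"
      define n where "n = Suc (Max (insert 0 W))"
      have fW: "finite W" using fE by (simp add: W_def)
      have wn: "w a b < n" if "a \<in> E" "b \<in> E" for a b
      proof -
        have "w a b \<in> insert 0 W" using that by (force simp: W_def)
        then have "w a b \<le> Max (insert 0 W)" using fW by simp
        then show ?thesis by (simp add: n_def)
      qed
      have n1: "n \<ge> 1" by (simp add: n_def)
      obtain F where F: "finite F" "F \<subseteq> K" "K \<subseteq> (\<Union>x\<in>F. bowen_ball T n x (\<rho>/2))"
          "card F = span_K T K n (\<rho>/2)"
        using span_mem[OF assms n1] rho by (meson half_gt_zero)
      have "\<forall>a\<in>E. \<exists>c\<in>F. a \<in> bowen_ball T n c (\<rho>/2)" using F fE by blast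
      then obtain f where f: "\<And>a. a \<in> E \<Longrightarrow> f a \<in> F \<and> a \<in> bowen_ball T n (f a) (\<rho>/2)"
        by metis
      have inj: "inj_on f E"
      proof (rule inj_onI, rule ccontr)
        fix a b assume ab: "a \<in> E" "b \<in> E" "f a = f b" "a \<noteq> b"
        let ?i = "w a b"
        have i: "?i < n" using wn ab by simp
        have 1: "dist ((T ^^ ?i) (f a)) ((T ^^ ?i) a) < \<rho>/2"
          using f[OF ab(1)] i unfolding bowen_ball_def bowen_less[OF n1] by blast
        have 2: "dist ((T ^^ ?i) (f a)) ((T ^^ ?i) b) < \<rho>/2"
          using f[OF ab(2)] i ab(3) unfolding bowen_ball_def bowen_less[OF n1] by auto
        have "dist ((T ^^ ?i) a) ((T ^^ ?i) b) \<le> dist ((T ^^ ?i) (f a)) ((T ^^ ?i) a) + dist ((T ^^ ?i) (f a)) ((T ^^ ?i) b)"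
          by (rule dist_triangle3)
        then show False using 1 2 w[OF ab(1,2,4)] by linarith
      qed
      have "f ` E \<subseteq> F" using f by auto
      then have "card E \<le> card F" using card_inj_on_le[OF inj _ F(1)] by simp
      then show ?thesis using F(4) C[OF n1] by simp
    qed
    have S0: "Sep {}" by (simp add: Sep_def)
    have "\<forall>y. Sep y \<longrightarrow> card y < Suc C" using cardC by (simp add: less_Suc_eq_le)
    from Lattices_Big.ex_has_greatest_nat[OF S0 this]
    obtain E where E: "Sep E" "\<And>E'. Sep E' \<Longrightarrow> card E' \<le> card E"
      by blast
    have fE: "finite E" "E \<subseteq> K" using E(1) by (auto simp: Sep_def)
    have covE: "\<exists>a\<in>E. \<forall>i. dist ((T ^^ i) a) ((T ^^ i) y) < \<rho>" if y: "y \<in> K" for y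
    proof (rule ccontr)
      assume nc: "\<not> ?thesis"
      then have yE: "y \<notin> E" using rho by force
      have "Sep (insert y E)"
        using E(1) nc y unfolding Sep_def
        by (auto simp: not_less dist_commute)
      then have "card (insert y E) \<le> card E" using E(2) by blast
      then show False using yE fE by simp
    qed
    define S where "S a = K \<inter> (\<Inter>i. X \<inter> (T ^^ i) -` cball ((T ^^ i) a) \<rho>)" for a
    have Scomp: "compact (S a)" for a
    proof -
      have "closed X" using assms(1) by (simp add: tds_def compact_imp_closed)
      then have "closed (X \<inter> (T ^^ i) -` cball ((T ^^ i) a) \<rho>)" for i
        using continuous_closed_preimage funpow_props[OF assms(1)] by blast
      then have "closed (\<Inter>i. X \<inter> (T ^^ i) -` cball ((T ^^ i) a) \<rho>)"
        by (intro closed_INT) blast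
      then show ?thesis unfolding S_def
        by (rule compact_Int_closed[OF assms(3)])
    qed
    have Smem: "y \<in> S a \<longleftrightarrow> y \<in> K \<and> (\<forall>i. dist ((T ^^ i) a) ((T ^^ i) y) \<le> \<rho>)" for a y
      unfolding S_def using assms(2) by auto
    have "\<exists>d>0. \<forall>p\<in>E \<times> E. (\<forall>x\<in>S (fst p). \<forall>y\<in>S (snd p). dist x y < d \<longrightarrow> S (fst p) \<inter> S (snd p) \<noteq> {})"
    proof (rule finite_pos)
      fix p :: "'a \<times> 'a"
      show "\<exists>d>0. \<forall>x\<in>S (fst p). \<forall>y\<in>S (snd p). dist x y < d \<longrightarrow> S (fst p) \<inter> S (snd p) \<noteq> {}"
      proof (cases "S (fst p) \<inter> S (snd p) = {}")
        case True
        then obtain d where "d > 0" "\<forall>x\<in>S (fst p). \<forall>y\<in>S (snd p). d \<le> dist x y"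
          using sep[OF Scomp Scomp] by blast
        then show ?thesis by (meson not_less)
      next
        case False then show ?thesis by (auto intro: exI[of _ 1])
      qed
    next
      fix p d d' assume "\<forall>x\<in>S (fst p). \<forall>y\<in>S (snd p). dist x y < (d::real) \<longrightarrow> S (fst p) \<inter> S (snd p) \<noteq> {}"
        "0 < d'" "d' \<le> d"
      then show "\<forall>x\<in>S (fst p). \<forall>y\<in>S (snd p). dist x y < d' \<longrightarrow> S (fst p) \<inter> S (snd p) \<noteq> {}"
        by (meson order_less_le_trans)
    qed (use fE in auto)
    then obtain d where d: "d > 0" "\<And>a b x y. a \<in> E \<Longrightarrow> b \<in> E \<Longrightarrow> x \<in> S a \<Longrightarrow> y \<in> S b \<Longrightarrow> dist x y < d \<Longrightarrow> S a \<inter> S b \<noteq> {}"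
      by fastforce
    show "\<exists>\<delta>>0. \<forall>n. \<forall>x\<in>K. \<forall>y\<in>K. dist x y < \<delta> \<longrightarrow> dist ((T ^^ n) x) ((T ^^ n) y) < e"
    proof (intro exI[of _ d] conjI allI ballI impI)
      fix n x y assume x: "x \<in> K" and y: "y \<in> K" and xy: "dist x y < d"
      obtain a where a: "a \<in> E" "\<forall>i. dist ((T ^^ i) a) ((T ^^ i) x) < \<rho>" using covE x by blast
      obtain b where b: "b \<in> E" "\<forall>i. dist ((T ^^ i) b) ((T ^^ i) y) < \<rho>" using covE y by blast
      have xa: "x \<in> S a" using a x Smem by (auto intro: less_imp_le)
      have yb: "y \<in> S b" using b y Smem by (auto intro: less_imp_le)
      obtain z where z: "z \<in> S a" "z \<in> S b" using d(2)[OF a(1) b(1) xa yb xy] by blast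
      have za: "dist ((T ^^ n) a) ((T ^^ n) z) \<le> \<rho>" using z Smem by blast
      have zb: "dist ((T ^^ n) b) ((T ^^ n) z) \<le> \<rho>" using z Smem by blast
      have "dist ((T ^^ n) x) ((T ^^ n) y) \<le> dist ((T ^^ n) a) ((T ^^ n) x) + dist ((T ^^ n) a) ((T ^^ n) y)"
        by (rule dist_triangle3)
      moreover have "dist ((T ^^ n) a) ((T ^^ n) y) \<le> dist ((T ^^ n) z) ((T ^^ n) a) + dist ((T ^^ n) z) ((T ^^ n) y)"
        by (rule dist_triangle3)
      moreover have "dist ((T ^^ n) z) ((T ^^ n) y) \<le> dist ((T ^^ n) b) ((T ^^ n) z) + dist ((T ^^ n) b) ((T ^^ n) y)"
        by (rule dist_triangle3)
      moreover have "dist ((T ^^ n) a) ((T ^^ n) x) < \<rho>" using a(2) by blast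
      moreover have "dist ((T ^^ n) b) ((T ^^ n) y) < \<rho>" using b(2) by blast
      moreover have "dist ((T ^^ n) z) ((T ^^ n) a) = dist ((T ^^ n) a) ((T ^^ n) z)" by (rule dist_commute)
      moreover have "e = 5 * \<rho>" by (simp add: \<rho>_def)
      ultimately show "dist ((T ^^ n) x) ((T ^^ n) y) < e"
        using za zb rho by linarith
    qed (rule d(1))
  qed
qed

theorem mainTheorem1:
  fixes X K :: "'a::metric_space set" and T :: "'a \<Rightarrow> 'a"
  assumes "tds X T" and "K \<subseteq> X" and "compact K"
  shows "bounded_top_complexity T K \<longleftrightarrow> equicontinuous_set T K"
  using dir1[OF assms] dir2[OF assms] by blast

end
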